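(* Let $s$ be a real-valued function with $s(t)=0$ for $t\notin[0,T_s]$ and $\int_0^{T_s}s(t)^2dt=1$, and let $\tau\in(0,T_s)$. Assume the matrix $\tilde T(\omega)$ defined in the context is positive definite for every $\omega\in[-\pi,\pi]$. Then for every $\rho_0>0$ and all nonzero complex numbers $\alpha_1,\alpha_2$, $$I_{E\text{-}MacA}>\log\left(1+\rho_0(|\alpha_1|^2+|\alpha_2|^2)\right).$$ The right-hand side is the mutual information of the synchronous space-time-coded $2\times1$ relay–destination link.
   Context: Let $S(t)=[s(t),s(t-\tau)]^T$ and $G(k)=\int_{-\infty}^{\infty}S(t)S(t-kT_s)^Tdt$ for $k\in\mathbb Z$. Define $\tilde T(\omega)=\sum_{k\in\mathbb Z}G(k)e^{-jk\omega}$ for $\omega\in[-\pi,\pi]$, a Hermitian $2\times 2$ matrix. For $s$ supported in $[0,T_s]$, its diagonal entries satisfy $\tilde T_{11}(\omega)=\tilde T_{22}(\omega)=1$. Define $$I_{E\text{-}MacA}=\frac1{2\pi}\int_{-\pi}^{\pi}\log\left(1+\rho_0(|\alpha_1|^2+|\alpha_2|^2)\tilde T_{11}(\omega)+\rho_0^2|\alpha_1|^2|\alpha_2|^2\det\tilde T(\omega)\right)d\omega.$$ *)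

theory Defs
  imports "HOL-Analysis.Analysis"
begin

definition Svec :: "(real \<Rightarrow> real) \<Rightarrow> real \<Rightarrow> real \<Rightarrow> real^2" where
  "Svec s tau t = vector [s t, s (t - tau)]"

definition Gmat :: "(real \<Rightarrow> real) \<Rightarrow> real \<Rightarrow> real \<Rightarrow> int \<Rightarrow> real^2^2" where
  "Gmat s tau Ts k = (\<chi> i j. LINT t|lborel. Svec s tau t $ i * Svec s tau (t - real_of_int k * Ts) $ j)"

definition Ttil :: "(real \<Rightarrow> real) \<Rightarrow> real \<Rightarrow> real \<Rightarrow> real \<Rightarrow> complex^2^2" where
  "Ttil s tau Ts \<omega> = (\<chi> i j. \<Sum>\<^sub>\<infinity>k\<in>(UNIV::int set).
       complex_of_real (Gmat s tau Ts k $ i $ j) * cis (- real_of_int k * \<omega>))"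

definition cmat_pos_def :: "complex^'n^'n \<Rightarrow> bool" where
  "cmat_pos_def A \<longleftrightarrow> (\<forall>i j. A $ j $ i = cnj (A $ i $ j)) \<and>
     (\<forall>v::complex^'n. v \<noteq> 0 \<longrightarrow>
        (let q = (\<Sum>i\<in>UNIV. \<Sum>j\<in>UNIV. cnj (v $ i) * A $ i $ j * v $ j) in Im q = 0 \<and> Re q > 0))"

text \<open>I_{E-MacA} (natural logarithm; the integrand is real since T~ is Hermitian)\<close>
definition I_EMacA :: "(real \<Rightarrow> real) \<Rightarrow> real \<Rightarrow> real \<Rightarrow> real \<Rightarrow> complex \<Rightarrow> complex \<Rightarrow> real" where
  "I_EMacA s tau Ts \<rho>0 \<alpha>1 \<alpha>2 = (1 / (2 * pi)) *
     (LINT \<omega>:{-pi..pi}|lborel.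
        ln (1 + \<rho>0 * ((cmod \<alpha>1)\<^sup>2 + (cmod \<alpha>2)\<^sup>2) * Re (Ttil s tau Ts \<omega> $ 1 $ 1)
             + \<rho>0\<^sup>2 * (cmod \<alpha>1)\<^sup>2 * (cmod \<alpha>2)\<^sup>2 * Re (det (Ttil s tau Ts \<omega>))))"

end

theory Submission imports Defs begin

lemma key1:
  fixes x Ts :: real and k :: int
  assumes "k \<noteq> 0" "Ts > 0" "0 \<le> x" "x \<le> Ts" "0 \<le> x - k*Ts" "x - k*Ts \<le> Ts"
  shows "x = 0 \<or> x = Ts"
proof (cases "k \<ge> 1")
  case True
  then have "real_of_int k * Ts \<ge> 1 * Ts" using assms by (intro mult_right_mono) auto
  then show ?thesis using assms by linarith
next
  case False
  then have "k \<le> -1" using assms by auto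
  then have "real_of_int k * Ts \<le> (-1) * Ts" using assms by (intro mult_right_mono) auto
  then show ?thesis using assms by linarith
qed

lemma key2:
  fixes x Ts \<tau> :: real and k :: int
  assumes "k \<noteq> 0" "k \<noteq> -1" "0 < \<tau>" "\<tau> < Ts" "0 \<le> x" "x \<le> Ts" "0 \<le> x - k*Ts - \<tau>" "x - k*Ts - \<tau> \<le> Ts"
  shows False
proof (cases "k \<ge> 1")
  case True
  then have "real_of_int k * Ts \<ge> 1 * Ts" using assms by (intro mult_right_mono) auto
  then show ?thesis using assms by linarith
next
  case False
  then have "k \<le> -2" using assms by auto
  then have "real_of_int k * Ts \<le> (-2) * Ts" using assms by (intro mult_right_mono) auto
  then show ?thesis using assms by linarith
qed

lemma G11_0:
  assumes supp: "\<And>t. t \<notin> {0..Ts} \<Longrightarrow> s t = 0" and "Ts > 0" and "k \<noteq> 0"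
  shows "Gmat s \<tau> Ts k $ 1 $ 1 = 0"
proof -
  have "AE t in lborel. s t * s (t - real_of_int k * Ts) = 0"
    using AE_lborel_singleton[of 0] AE_lborel_singleton[of Ts]
  proof eventually_elim
    case (elim t)
    show ?case
    proof (rule ccontr)
      assume "s t * s (t - real_of_int k * Ts) \<noteq> 0"
      then have "t \<in> {0..Ts}" "t - real_of_int k * Ts \<in> {0..Ts}" using supp by fastforce+
      then show False using key1[of k Ts t] assms elim by auto
    qed
  qed
  then show ?thesis unfolding Gmat_def Svec_def by (simp add: integral_eq_zero_AE)
qed

lemma G22_0:
  assumes supp: "\<And>t. t \<notin> {0..Ts} \<Longrightarrow> s t = 0" and "Ts > 0" and "k \<noteq> 0"
  shows "Gmat s \<tau> Ts k $ 2 $ 2 = 0"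
proof -
  have "AE t in lborel. s (t - \<tau>) * s (t - real_of_int k * Ts - \<tau>) = 0"
    using AE_lborel_singleton[of \<tau>] AE_lborel_singleton[of "Ts + \<tau>"]
  proof eventually_elim
    case (elim t)
    show ?case
    proof (rule ccontr)
      assume "s (t - \<tau>) * s (t - real_of_int k * Ts - \<tau>) \<noteq> 0"
      then have n1: "s (t - \<tau>) \<noteq> 0" and n2: "s (t - real_of_int k * Ts - \<tau>) \<noteq> 0" by auto
      have m1: "t - \<tau> \<in> {0..Ts}" using supp n1 by blast
      have m2: "t - real_of_int k * Ts - \<tau> \<in> {0..Ts}" using supp n2 by blast
      have eq: "t - \<tau> - real_of_int k * Ts = t - real_of_int k * Ts - \<tau>" by simp
      have "0 \<le> t - \<tau>" "t - \<tau> \<le> Ts" "0 \<le> t - \<tau> - real_of_int k * Ts" "t - \<tau> - real_of_int k * Ts \<le> Ts"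
        using m1 m2 unfolding eq by auto
      then have "t - \<tau> = 0 \<or> t - \<tau> = Ts" using key1[of k Ts "t - \<tau>"] assms by blast
      then show False using elim by auto
    qed
  qed
  then show ?thesis unfolding Gmat_def Svec_def by (simp add: integral_eq_zero_AE)
qed

lemma G12_0:
  assumes supp: "\<And>t. t \<notin> {0..Ts} \<Longrightarrow> s t = 0" and "0 < \<tau>" "\<tau> < Ts" "k \<noteq> 0" "k \<noteq> -1"
  shows "Gmat s \<tau> Ts k $ 1 $ 2 = 0"
proof -
  have "\<And>t. s t * s (t - real_of_int k * Ts - \<tau>) = 0"
  proof (rule ccontr)
    fix t assume "s t * s (t - real_of_int k * Ts - \<tau>) \<noteq> 0"
    then have "t \<in> {0..Ts}" "t - real_of_int k * Ts - \<tau> \<in> {0..Ts}" using supp by fastforce+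
    then show False using key2[of k \<tau> Ts t] assms by auto
  qed
  then have "(\<lambda>t. s t * s (t - real_of_int k * Ts - \<tau>)) = (\<lambda>t. 0)" by auto
  then show ?thesis unfolding Gmat_def Svec_def by (simp add: diff_diff_eq)
qed

lemma infsum_supp:
  fixes f :: "'a \<Rightarrow> 'b::{comm_monoid_add,t2_space}"
  assumes "finite F" "\<And>x. x \<notin> F \<Longrightarrow> f x = 0"
  shows "infsum f UNIV = sum f F"
proof -
  have "infsum f UNIV = infsum f F" by (rule infsum_cong_neutral) (use assms in auto)
  then show ?thesis using assms by simp
qed

lemma G11_00:
  assumes supp: "\<And>t. t \<notin> {0..Ts} \<Longrightarrow> s t = 0"
    and energy: "(LINT t:{0..Ts}|lborel. (s t)\<^sup>2) = 1"
  shows "Gmat s \<tau> Ts 0 $ 1 $ 1 = 1"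
proof -
  have "(\<lambda>t. indicator {0..Ts} t *\<^sub>R (s t)\<^sup>2) = (\<lambda>t. s t * s t)"
    using supp by (auto simp: indicator_def power2_eq_square fun_eq_iff)
  then show ?thesis using energy unfolding Gmat_def Svec_def set_lebesgue_integral_def by simp
qed

lemma T11:
  assumes supp: "\<And>t. t \<notin> {0..Ts} \<Longrightarrow> s t = 0"
    and energy: "(LINT t:{0..Ts}|lborel. (s t)\<^sup>2) = 1" and "Ts > 0"
  shows "Ttil s \<tau> Ts \<omega> $ 1 $ 1 = 1"
proof -
  have "Ttil s \<tau> Ts \<omega> $ 1 $ 1 = (\<Sum>k\<in>{0}. complex_of_real (Gmat s \<tau> Ts k $ 1 $ 1) * cis (- real_of_int k * \<omega>))"
    unfolding Ttil_def vec_lambda_beta by (rule infsum_supp) (auto intro: G11_0[OF supp \<open>Ts > 0\<close>])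
  then show ?thesis using G11_00[OF supp energy] by simp
qed

lemma T22:
  assumes supp: "\<And>t. t \<notin> {0..Ts} \<Longrightarrow> s t = 0" and "Ts > 0"
  shows "Ttil s \<tau> Ts \<omega> $ 2 $ 2 = complex_of_real (Gmat s \<tau> Ts 0 $ 2 $ 2)"
proof -
  have "Ttil s \<tau> Ts \<omega> $ 2 $ 2 = (\<Sum>k\<in>{0}. complex_of_real (Gmat s \<tau> Ts k $ 2 $ 2) * cis (- real_of_int k * \<omega>))"
    unfolding Ttil_def vec_lambda_beta by (rule infsum_supp) (auto intro: G22_0[OF supp \<open>Ts > 0\<close>])
  then show ?thesis by simp
qed

lemma T12:
  assumes supp: "\<And>t. t \<notin> {0..Ts} \<Longrightarrow> s t = 0" and "0 < \<tau>" "\<tau> < Ts"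
  shows "Ttil s \<tau> Ts \<omega> $ 1 $ 2 = complex_of_real (Gmat s \<tau> Ts 0 $ 1 $ 2)
     + complex_of_real (Gmat s \<tau> Ts (-1) $ 1 $ 2) * cis \<omega>"
proof -
  have "Ttil s \<tau> Ts \<omega> $ 1 $ 2 = (\<Sum>k\<in>{0,-1}. complex_of_real (Gmat s \<tau> Ts k $ 1 $ 2) * cis (- real_of_int k * \<omega>))"
    unfolding Ttil_def vec_lambda_beta by (rule infsum_supp) (auto intro: G12_0[OF supp assms(2,3)])
  then show ?thesis by simp
qed

lemma herm21:
  assumes "cmat_pos_def (A::complex^2^2)" shows "A $ 2 $ 1 = cnj (A $ 1 $ 2)"
proof -
  have "\<forall>i j. A $ j $ i = cnj (A $ i $ j)" using assms unfolding cmat_pos_def_def by (rule conjunct1)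
  then show ?thesis by blast
qed

lemma posq: "cmat_pos_def (A::complex^'n^'n) \<Longrightarrow> v \<noteq> 0 \<Longrightarrow>
   Re (\<Sum>i\<in>UNIV. \<Sum>j\<in>UNIV. cnj (v $ i) * A $ i $ j * v $ j) > 0"
  unfolding cmat_pos_def_def Let_def by blast

lemma alg: "cnj (- z) * 1 * (- z) + cnj (- z) * z * 1 + (cnj 1 * cnj z * (- z) + cnj 1 * complex_of_real d * 1)
   = complex_of_real d - z * cnj z"
  by (simp add: algebra_simps)

theorem theorem10:
  fixes s :: "real \<Rightarrow> real" and Ts \<tau> :: real
  assumes supp: "\<And>t. t \<notin> {0..Ts} \<Longrightarrow> s t = 0"
    and energy: "(LINT t:{0..Ts}|lborel. (s t)\<^sup>2) = 1"
    and tau: "0 < \<tau>" "\<tau> < Ts"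
    and pd: "\<And>\<omega>. \<omega> \<in> {-pi..pi} \<Longrightarrow> cmat_pos_def (Ttil s \<tau> Ts \<omega>)"
  shows "\<forall>\<rho>0 > 0. \<forall>\<alpha>1 \<alpha>2 :: complex. \<alpha>1 \<noteq> 0 \<longrightarrow> \<alpha>2 \<noteq> 0 \<longrightarrow>
           I_EMacA s \<tau> Ts \<rho>0 \<alpha>1 \<alpha>2 > ln (1 + \<rho>0 * ((cmod \<alpha>1)\<^sup>2 + (cmod \<alpha>2)\<^sup>2))"
proof (intro allI impI)
  fix \<rho>0 :: real and \<alpha>1 \<alpha>2 :: complex
  assume r: "\<rho>0 > 0" and a1: "\<alpha>1 \<noteq> 0" and a2: "\<alpha>2 \<noteq> 0"
  have Ts: "Ts > 0" using tau by linarith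
  define A where "A = \<rho>0 * ((cmod \<alpha>1)\<^sup>2 + (cmod \<alpha>2)\<^sup>2)"
  define B where "B = \<rho>0\<^sup>2 * (cmod \<alpha>1)\<^sup>2 * (cmod \<alpha>2)\<^sup>2"
  have A: "A > 0" unfolding A_def using r a1 a2 by (simp add: add_pos_pos)
  have B: "B > 0" unfolding B_def using r a1 a2 by simp
  define d where "d = Gmat s \<tau> Ts 0 $ 2 $ 2"
  define c where "c = (\<lambda>\<omega>. complex_of_real (Gmat s \<tau> Ts 0 $ 1 $ 2)
     + complex_of_real (Gmat s \<tau> Ts (-1) $ 1 $ 2) * cis \<omega>)"
  define h where "h = (\<lambda>\<omega>. ln (1 + A + B * (d - (cmod (c \<omega>))\<^sup>2)))"
  have pos: "d - (cmod (c \<omega>))\<^sup>2 > 0" if w: "\<omega> \<in> {-pi..pi}" for \<omega>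
  proof -
    let ?M = "Ttil s \<tau> Ts \<omega>"
    have M11: "?M $ 1 $ 1 = 1" by (rule T11[OF supp energy Ts])
    have M22: "?M $ 2 $ 2 = complex_of_real d" unfolding d_def by (rule T22[OF supp Ts])
    have M12: "?M $ 1 $ 2 = c \<omega>" unfolding c_def by (rule T12[OF supp tau])
    have herm: "?M $ 2 $ 1 = cnj (c \<omega>)" using herm21[OF pd[OF w]] M12 by simp
    define v :: "complex^2" where "v = vector [- c \<omega>, 1]"
    have "v $ 2 = 1" unfolding v_def by simp
    then have "v \<noteq> 0" by auto
    then have "Re (\<Sum>i\<in>UNIV. \<Sum>j\<in>UNIV. cnj (v $ i) * ?M $ i $ j * v $ j) > 0"
      by (rule posq[OF pd[OF w]])
    also have "(\<Sum>i\<in>UNIV. \<Sum>j\<in>UNIV. cnj (v $ i) * ?M $ i $ j * v $ j)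
        = complex_of_real d - c \<omega> * cnj (c \<omega>)"
    proof -
      have v1: "v $ 1 = - c \<omega>" "v $ 2 = 1" by (simp_all add: v_def)
      have "(\<Sum>i\<in>UNIV. \<Sum>j\<in>UNIV. cnj (v $ i) * ?M $ i $ j * v $ j)
         = cnj (v$1) * ?M$1$1 * v$1 + cnj (v$1) * ?M$1$2 * v$2 + (cnj (v$2) * ?M$2$1 * v$1 + cnj (v$2) * ?M$2$2 * v$2)"
        by (simp only: sum_2)
      also have "\<dots> = cnj (- c \<omega>) * 1 * (- c \<omega>) + cnj (- c \<omega>) * c \<omega> * 1 + (cnj 1 * cnj (c \<omega>) * (- c \<omega>) + cnj 1 * complex_of_real d * 1)"
        by (simp only: v1 M11 M12 M22 herm)
      also have "\<dots> = complex_of_real d - c \<omega> * cnj (c \<omega>)" by (rule alg)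
      finally show ?thesis .
    qed
    finally show ?thesis unfolding complex_norm_square[symmetric] by simp
  qed
  have integrand: "ln (1 + \<rho>0 * ((cmod \<alpha>1)\<^sup>2 + (cmod \<alpha>2)\<^sup>2) * Re (Ttil s \<tau> Ts \<omega> $ 1 $ 1)
             + \<rho>0\<^sup>2 * (cmod \<alpha>1)\<^sup>2 * (cmod \<alpha>2)\<^sup>2 * Re (det (Ttil s \<tau> Ts \<omega>))) = h \<omega>"
    if w: "\<omega> \<in> {-pi..pi}" for \<omega>
  proof -
    let ?M = "Ttil s \<tau> Ts \<omega>"
    have M11: "?M $ 1 $ 1 = 1" by (rule T11[OF supp energy Ts])
    have M22: "?M $ 2 $ 2 = complex_of_real d" unfolding d_def by (rule T22[OF supp Ts])
    have M12: "?M $ 1 $ 2 = c \<omega>" unfolding c_def by (rule T12[OF supp tau])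
    have herm: "?M $ 2 $ 1 = cnj (c \<omega>)" using herm21[OF pd[OF w]] M12 by simp
    have "Re (det ?M) = d - (cmod (c \<omega>))\<^sup>2"
      unfolding det_2 M11 M22 M12 herm complex_norm_square[symmetric] by simp
    then show ?thesis unfolding h_def A_def B_def M11 by simp
  qed
  have hpos: "1 + A + B * (d - (cmod (c \<omega>))\<^sup>2) > 1 + A" if "\<omega> \<in> {-pi..pi}" for \<omega>
    using pos[OF that] B by simp
  have cont: "continuous_on {-pi..pi} h"
  proof -
    have ne: "1 + A + B * (d - (cmod (c \<omega>))\<^sup>2) \<noteq> 0" if "\<omega> \<in> {-pi..pi}" for \<omega>
      using hpos[OF that] A by linarith
    have cc: "continuous_on {-pi..pi} c" unfolding c_def by (intro continuous_intros)
    have ne': "\<forall>\<omega>\<in>{-pi..pi}. 1 + A + B * (d - (cmod (c \<omega>))\<^sup>2) \<noteq> 0"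
      using ne by blast
    have "continuous_on {-pi..pi} (\<lambda>\<omega>. 1 + A + B * (d - (cmod (c \<omega>))\<^sup>2))"
      by (intro continuous_intros cc)
    then show ?thesis unfolding h_def by (rule continuous_on_ln[OF _ ne'])
  qed
  have si: "set_integrable lborel {-pi..pi} h"
    unfolding set_integrable_def by (rule borel_integrable_compact[OF compact_Icc cont])
  have "I_EMacA s \<tau> Ts \<rho>0 \<alpha>1 \<alpha>2 = (1 / (2 * pi)) * (LINT \<omega>:{-pi..pi}|lborel. h \<omega>)"
    unfolding I_EMacA_def by (subst set_lebesgue_integral_cong[OF _ ]) (auto simp: integrand)
  also have "\<dots> = (1 / (2 * pi)) * integral {-pi..pi} h"
    using set_borel_integral_eq_integral(2)[OF si] by simp
  finally have I: "I_EMacA s \<tau> Ts \<rho>0 \<alpha>1 \<alpha>2 = (1 / (2 * pi)) * integral {-pi..pi} h" .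
  obtain w0 where w0: "w0 \<in> {-pi..pi}" "\<And>y. y \<in> {-pi..pi} \<Longrightarrow> h w0 \<le> h y"
    using continuous_attains_inf[OF compact_Icc _ cont] by auto
  have "integral {-pi..pi} (\<lambda>_. h w0) \<le> integral {-pi..pi} h"
    by (rule integral_le) (use set_borel_integral_eq_integral(1)[OF si] w0 in auto)
  then have "2 * pi * h w0 \<le> integral {-pi..pi} h" by simp
  then have "h w0 \<le> (1 / (2 * pi)) * integral {-pi..pi} h" by (simp add: field_simps)
  moreover have "ln (1 + A) < h w0"
    unfolding h_def using hpos[OF w0(1)] A by simp
  ultimately show "I_EMacA s \<tau> Ts \<rho>0 \<alpha>1 \<alpha>2 > ln (1 + \<rho>0 * ((cmod \<alpha>1)\<^sup>2 + (cmod \<alpha>2)\<^sup>2))"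
    using I unfolding A_def by linarith
qed

end
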